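(* Let $A\in\mathbb{R}^{n\times n}$ be symmetric positive-semidefinite, $b\in\mathbb{R}^n$, $g:\mathbb{R}^n\to(-\infty,\infty]$ proper, lower semicontinuous and convex, and $\gamma>0$ such that $I-\gamma A$ is positive-definite. Set $Q:=(I-\gamma A)^{-1}$, $c:=\gamma Qb$, $P:=Q-I$, and $\psi(u):=\frac12\langle Pu,u\rangle+\langle c,u\rangle+\gamma e_\gamma g(u)$. Then for all $u,w,z\in\mathbb{R}^n$: $z\in\partial^2\psi(u)(w)$ if and only if $\frac1\gamma(z-Pw)\in\partial^2g\Big(\operatorname{Prox}_{\gamma g}(u),\frac1\gamma\big(u-\operatorname{Prox}_{\gamma g}(u)\big)\Big)(Qw-z)$.
   Context: Moreau envelope and proximal map: $e_\gamma g(x):=\inf_y\{g(y)+\frac1{2\gamma}\|y-x\|^2\}$, $\operatorname{Prox}_{\gamma g}(x):=\operatorname{argmin}_y\{g(y)+\frac1{2\gamma}\|y-x\|^2\}$ ($\psi$ is continuously differentiable). Regular normal cone: $\widehat N_\Omega(\bar z):=\{v\mid \limsup_{z\to\bar z,\,z\in\Omega}\langle v,z-\bar z\rangle/\|z-\bar z\|\le 0\}$; limiting normal cone $N_\Omega(\bar z)$: all $v$ with $z_k\to\bar z$, $z_k\in\Omega$, $v_k\to v$, $v_k\in\widehat N_\Omega(z_k)$. Coderivative of $F:\mathbb{R}^n\rightrightarrows\mathbb{R}^m$: $D^*F(\bar x,\bar y)(v):=\{u\mid(u,-v)\in N_{\operatorname{gph}F}(\bar x,\bar y)\}$. Second-order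 subdifferential: for $\bar v\in\partial g(\bar x)$ (convex subdifferential), $\partial^2g(\bar x,\bar v)(w):=D^*(\partial g)(\bar x,\bar v)(w)$; for the $\mathcal{C}^1$ function $\psi$, $\partial^2\psi(u)(w):=D^*(\nabla\psi)(u,\nabla\psi(u))(w)$. *)

theory Defs
  imports "HOL-Analysis.Analysis"
begin

definition proper_fun :: "('a \<Rightarrow> ereal) \<Rightarrow> bool" where
  "proper_fun g \<longleftrightarrow> (\<forall>x. g x \<noteq> -\<infinity>) \<and> (\<exists>x. g x < \<infinity>)"

definition lsc_fun :: "('a::topological_space \<Rightarrow> ereal) \<Rightarrow> bool" where
  "lsc_fun g \<longleftrightarrow> (\<forall>x. g x \<le> Liminf (at x) g)"

definition convex_fun :: "('a::real_vector \<Rightarrow> ereal) \<Rightarrow> bool" where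
  "convex_fun g \<longleftrightarrow> (\<forall>x y t. 0 < t \<and> t < 1 \<longrightarrow>
      g (t *\<^sub>R x + (1 - t) *\<^sub>R y) \<le> ereal t * g x + ereal (1 - t) * g y)"

definition moreau_env :: "real \<Rightarrow> ('a::real_normed_vector \<Rightarrow> ereal) \<Rightarrow> 'a \<Rightarrow> ereal" where
  "moreau_env \<gamma> g x = (INF y. g y + ereal ((1 / (2 * \<gamma>)) * (norm (y - x))\<^sup>2))"

definition prox :: "real \<Rightarrow> ('a::real_normed_vector \<Rightarrow> ereal) \<Rightarrow> 'a \<Rightarrow> 'a" where
  "prox \<gamma> g x = (THE p. \<forall>y. g p + ereal ((1 / (2 * \<gamma>)) * (norm (p - x))\<^sup>2)
                              \<le> g y + ereal ((1 / (2 * \<gamma>)) * (norm (y - x))\<^sup>2))"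

definition subdiff :: "('a::real_inner \<Rightarrow> ereal) \<Rightarrow> 'a \<Rightarrow> 'a set" where
  "subdiff g x = {v. \<bar>g x\<bar> \<noteq> \<infinity> \<and> (\<forall>y. g x + ereal (inner v (y - x)) \<le> g y)}"

definition grad :: "('a::real_inner \<Rightarrow> real) \<Rightarrow> 'a \<Rightarrow> 'a" where
  "grad f x = (SOME v. (f has_derivative (\<lambda>h. inner v h)) (at x))"

definition reg_normal_cone :: "'a::real_inner set \<Rightarrow> 'a \<Rightarrow> 'a set" where
  "reg_normal_cone \<Omega> zb = {v. zb \<in> \<Omega> \<and>
      Limsup (at zb within \<Omega>) (\<lambda>z. ereal (inner v (z - zb) / norm (z - zb))) \<le> 0}"

definition lim_normal_cone :: "'a::real_inner set \<Rightarrow> 'a \<Rightarrow> 'a set" where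
  "lim_normal_cone \<Omega> zb = {v. \<exists>z vs. (\<forall>k. z k \<in> \<Omega>) \<and> z \<longlonglongrightarrow> zb \<and>
      vs \<longlonglongrightarrow> v \<and> (\<forall>k. vs k \<in> reg_normal_cone \<Omega> (z k))}"

definition gph :: "('a \<Rightarrow> 'b set) \<Rightarrow> ('a \<times> 'b) set" where
  "gph F = {(x, y). y \<in> F x}"

definition coderiv :: "('a::real_inner \<Rightarrow> 'b::real_inner set) \<Rightarrow> 'a \<Rightarrow> 'b \<Rightarrow> 'b \<Rightarrow> 'a set" where
  "coderiv F xb yb v = {u. (u, - v) \<in> lim_normal_cone (gph F) (xb, yb)}"

definition subdiff2 :: "('a::real_inner \<Rightarrow> ereal) \<Rightarrow> 'a \<Rightarrow> 'a \<Rightarrow> 'a \<Rightarrow> 'a set" where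
  "subdiff2 g xb vb w = coderiv (subdiff g) xb vb w"

definition subdiff2_C1 :: "('a::real_inner \<Rightarrow> real) \<Rightarrow> 'a \<Rightarrow> 'a \<Rightarrow> 'a set" where
  "subdiff2_C1 \<psi> u w = coderiv (\<lambda>x. {grad \<psi> x}) u (grad \<psi> u) w"

end

theory Submission
  imports Defs
begin
lemma regN_iff:
  fixes v x :: "'a::real_inner"
  shows "v \<in> reg_normal_cone \<Omega> x \<longleftrightarrow> x \<in> \<Omega> \<and>
    (\<forall>e>0. \<exists>d>0. \<forall>z\<in>\<Omega>. norm (z - x) < d \<longrightarrow> inner v (z - x) \<le> e * norm (z - x))"
proof -
  let ?f = "\<lambda>z. ereal (inner v (z - x) / norm (z - x))"
  have "Limsup (at x within \<Omega>) ?f \<le> 0 \<longleftrightarrow>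
     (\<forall>e>0. \<exists>d>0. \<forall>z\<in>\<Omega>. norm (z - x) < d \<longrightarrow> inner v (z - x) \<le> e * norm (z - x))"
  proof
    assume L: "Limsup (at x within \<Omega>) ?f \<le> 0"
    show "\<forall>e>0. \<exists>d>0. \<forall>z\<in>\<Omega>. norm (z - x) < d \<longrightarrow> inner v (z - x) \<le> e * norm (z - x)"
    proof (intro allI impI)
      fix e :: real assume e: "e > 0"
      have "eventually (\<lambda>z. ?f z < ereal e) (at x within \<Omega>)"
      proof -
        have "\<forall>y>0. eventually (\<lambda>z. ?f z < y) (at x within \<Omega>)"
          using L Limsup_le_iff[where C=0 and F="at x within \<Omega>" and X="?f"] by auto
        then show ?thesis using e by (metis ereal_less(2))
      qed
      then obtain d where d: "d > 0" and H: "\<forall>z\<in>\<Omega>. z \<noteq> x \<and> dist z x < d \<longrightarrow> ?f z < ereal e"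
        unfolding eventually_at by blast
      show "\<exists>d>0. \<forall>z\<in>\<Omega>. norm (z - x) < d \<longrightarrow> inner v (z - x) \<le> e * norm (z - x)"
      proof (intro exI[of _ d] conjI ballI impI)
        fix z assume z: "z \<in> \<Omega>" "norm (z - x) < d"
        show "inner v (z - x) \<le> e * norm (z - x)"
        proof (cases "z = x")
          case True then show ?thesis by simp
        next
          case False
          then have np: "norm (z - x) > 0" by simp
          have "inner v (z - x) / norm (z - x) < e" using H z False by (simp add: dist_norm)
          then show ?thesis using np by (simp add: divide_less_eq)
        qed
      qed (use d in auto)
    qed
  next
    assume R: "\<forall>e>0. \<exists>d>0. \<forall>z\<in>\<Omega>. norm (z - x) < d \<longrightarrow> inner v (z - x) \<le> e * norm (z - x)"
    show "Limsup (at x within \<Omega>) ?f \<le> 0"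
      unfolding Limsup_le_iff
    proof (intro allI impI)
      fix y :: ereal assume y: "y > 0"
      show "eventually (\<lambda>z. y > ?f z) (at x within \<Omega>)"
      proof (cases y)
        case (real e)
        with y have e: "e > 0" by simp
        obtain d where d: "d > 0" and H: "\<forall>z\<in>\<Omega>. norm (z - x) < d \<longrightarrow> inner v (z - x) \<le> (e/2) * norm (z - x)"
          using R e by (meson half_gt_zero)
        show ?thesis unfolding eventually_at
        proof (intro exI[of _ d] conjI ballI impI)
          fix z assume z: "z \<in> \<Omega>" "z \<noteq> x \<and> dist z x < d"
          then have np: "norm (z - x) > 0" by simp
          have "inner v (z - x) \<le> (e/2) * norm (z - x)" using H z by (simp add: dist_norm)
          also have "\<dots> < e * norm (z - x)" using np e by simp
          finally have "inner v (z - x) / norm (z - x) < e" using np by (simp add: divide_less_eq)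
          then show "y > ?f z" using real by simp
        qed (use d in auto)
      next
        case PInf then show ?thesis by simp
      next
        case MInf then show ?thesis using y by simp
      qed
    qed
  qed
  then show ?thesis unfolding reg_normal_cone_def by auto
qed

lemma regN_transfer:
  fixes \<Phi> :: "'a::real_inner \<Rightarrow> 'b::real_inner"
  assumes map: "\<Phi> ` \<Omega> \<subseteq> \<Omega>'" and K: "K > 0"
    and lip: "\<forall>a b. norm (\<Phi> a - \<Phi> b) \<le> K * norm (a - b)"
    and s: "s > 0" and adj: "\<forall>a. inner ty (a - z) = s * inner y (\<Phi> a - \<Phi> z)"
    and z: "z \<in> \<Omega>" and y: "y \<in> reg_normal_cone \<Omega>' (\<Phi> z)"
  shows "ty \<in> reg_normal_cone \<Omega> z"
  unfolding regN_iff
proof (intro conjI z allI impI)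
  fix e :: real assume e: "e > 0"
  have "e / (s * K) > 0" using e s K by simp
  then obtain d where d: "d > 0" and H: "\<forall>w\<in>\<Omega>'. norm (w - \<Phi> z) < d \<longrightarrow> inner y (w - \<Phi> z) \<le> (e / (s * K)) * norm (w - \<Phi> z)"
    using y unfolding regN_iff by blast
  show "\<exists>d>0. \<forall>w\<in>\<Omega>. norm (w - z) < d \<longrightarrow> inner ty (w - z) \<le> e * norm (w - z)"
  proof (intro exI[of _ "d / K"] conjI ballI impI)
    show "d / K > 0" using d K by simp
    fix w assume w: "w \<in> \<Omega>" "norm (w - z) < d / K"
    have n1: "norm (\<Phi> w - \<Phi> z) \<le> K * norm (w - z)" using lip by blast
    have "K * norm (w - z) < d" using w K by (simp add: less_divide_eq mult.commute)
    then have "norm (\<Phi> w - \<Phi> z) < d" using n1 by linarith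
    moreover have "\<Phi> w \<in> \<Omega>'" using map w by blast
    ultimately have "inner y (\<Phi> w - \<Phi> z) \<le> (e / (s * K)) * norm (\<Phi> w - \<Phi> z)" using H by blast
    also have "\<dots> \<le> (e / (s * K)) * (K * norm (w - z))"
      using n1 e s K by (intro mult_left_mono) auto
    also have "\<dots> = (e / s) * norm (w - z)" using K by simp
    finally have "inner y (\<Phi> w - \<Phi> z) \<le> (e / s) * norm (w - z)" .
    then have "s * inner y (\<Phi> w - \<Phi> z) \<le> s * ((e / s) * norm (w - z))"
      by (rule mult_left_mono) (use s in auto)
    also have "\<dots> = e * norm (w - z)" using s by simp
    finally show "inner ty (w - z) \<le> e * norm (w - z)" using adj s by simp
  qed
qed

lemma lim_transfer:
  fixes \<Phi> :: "'a::real_inner \<Rightarrow> 'b::real_inner"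
  assumes map: "\<Phi> ` \<Omega> \<subseteq> \<Omega>'" and map2: "\<Psi> ` \<Omega>' \<subseteq> \<Omega>"
    and inv1: "\<forall>x. \<Phi> (\<Psi> x) = x" and inv2: "\<forall>z. \<Psi> (\<Phi> z) = z"
    and cont: "\<forall>x. isCont \<Psi> x"
    and K: "K > 0"
    and lip: "\<forall>a b. norm (\<Phi> a - \<Phi> b) \<le> K * norm (a - b)"
    and T: "bounded_linear T"
    and s: "s > 0" and adj: "\<forall>y a b. inner (T y) (a - b) = s * inner y (\<Phi> a - \<Phi> b)"
    and y: "y \<in> lim_normal_cone \<Omega>' (\<Phi> zb)"
  shows "T y \<in> lim_normal_cone \<Omega> zb"
proof -
  obtain x vs where x: "\<forall>k. x k \<in> \<Omega>'" and xl: "x \<longlonglongrightarrow> \<Phi> zb" and vl: "vs \<longlonglongrightarrow> y"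
    and vN: "\<forall>k. vs k \<in> reg_normal_cone \<Omega>' (x k)"
    using y unfolding lim_normal_cone_def by blast
  define z where "z k = \<Psi> (x k)" for k
  have zO: "\<forall>k. z k \<in> \<Omega>" using x map2 z_def by blast
  have "(\<lambda>k. \<Psi> (x k)) \<longlonglongrightarrow> \<Psi> (\<Phi> zb)"
    by (rule isCont_tendsto_compose[OF cont[rule_format] xl])
  then have zl: "z \<longlonglongrightarrow> zb" using inv2 unfolding z_def[abs_def] by simp
  have tl: "(\<lambda>k. T (vs k)) \<longlonglongrightarrow> T y"
    using bounded_linear.tendsto[OF T vl] .
  have "\<forall>k. T (vs k) \<in> reg_normal_cone \<Omega> (z k)"
  proof
    fix k
    have "vs k \<in> reg_normal_cone \<Omega>' (\<Phi> (z k))" using vN inv1 z_def by simp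
    moreover have "\<forall>a. inner (T (vs k)) (a - z k) = s * inner (vs k) (\<Phi> a - \<Phi> (z k))" using adj by blast
    ultimately show "T (vs k) \<in> reg_normal_cone \<Omega> (z k)"
      using regN_transfer[OF map K lip s _ zO[rule_format, of k]] by blast
  qed
  then show ?thesis unfolding lim_normal_cone_def using zO zl tl by blast
qed

lemma lim_scale:
  fixes v :: "'a::real_inner"
  assumes c: "c > 0" and v: "v \<in> lim_normal_cone \<Omega> x"
  shows "c *\<^sub>R v \<in> lim_normal_cone \<Omega> x"
proof -
  have "c *\<^sub>R v \<in> lim_normal_cone \<Omega> (id x)"
    by (rule lim_transfer[where \<Phi>=id and \<Psi>=id and K=1 and s=c and T="\<lambda>y. c *\<^sub>R y"])
       (use c v in \<open>auto intro: bounded_linear_scaleR_right\<close>)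
  then show ?thesis by simp
qed

lemma lsc_delta:
  fixes g :: "'a::metric_space \<Rightarrow> ereal"
  assumes "lsc_fun g" "c < g x"
  shows "\<exists>d>0. \<forall>y. dist y x < d \<longrightarrow> c < g y"
proof -
  have "c < Liminf (at x) g" using assms unfolding lsc_fun_def by (metis order_less_le_trans)
  then have "eventually (\<lambda>y. c < g y) (at x)" by (rule less_LiminfD)
  then obtain d where d: "d > 0" "\<forall>y\<in>UNIV. y \<noteq> x \<and> dist y x < d \<longrightarrow> c < g y"
    unfolding eventually_at by blast
  then show ?thesis using assms(2) by (metis UNIV_I)
qed

lemma compact_min:
  fixes f :: "'a::metric_space \<Rightarrow> ereal"
  assumes lsc: "\<And>x c. c < f x \<Longrightarrow> \<exists>d>0. \<forall>y. dist y x < d \<longrightarrow> c < f y"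
    and K: "compact K" "K \<noteq> {}"
  shows "\<exists>x\<in>K. \<forall>y\<in>K. f x \<le> f y"
proof (rule ccontr)
  assume N: "\<not> ?thesis"
  define m where "m = (INF y\<in>K. f y)"
  have mx: "\<forall>x\<in>K. m < f x"
  proof
    fix x assume x: "x \<in> K"
    then obtain y where "y \<in> K" "f y < f x" using N by (meson not_le)
    then show "m < f x" unfolding m_def by (meson INF_lower order_le_less_trans)
  qed
  have "\<forall>x\<in>K. \<exists>cd. m < fst cd \<and> snd cd > 0 \<and> (\<forall>y. dist y x < snd cd \<longrightarrow> fst cd < f y)"
  proof
    fix x assume x: "x \<in> K"
    obtain c where c: "m < c" "c < f x" using mx x dense by blast
    obtain d where "d > 0" "\<forall>y. dist y x < d \<longrightarrow> c < f y" using lsc[OF c(2)] by blast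
    then show "\<exists>cd. m < fst cd \<and> snd cd > 0 \<and> (\<forall>y. dist y x < snd cd \<longrightarrow> fst cd < f y)"
      using c by (intro exI[of _ "(c, d)"]) auto
  qed
  then obtain CD where CD: "\<forall>x\<in>K. m < fst (CD x) \<and> snd (CD x) > 0 \<and> (\<forall>y. dist y x < snd (CD x) \<longrightarrow> fst (CD x) < f y)"
    by metis
  have cov: "K \<subseteq> (\<Union>x\<in>K. ball x (snd (CD x)))" using CD by force
  obtain F where F: "F \<subseteq> K" "finite F" "K \<subseteq> (\<Union>x\<in>F. ball x (snd (CD x)))"
    by (rule compactE_image[OF K(1) _ cov]) auto
  have Fne: "F \<noteq> {}" using F K(2) by blast
  define c0 where "c0 = Min ((\<lambda>x. fst (CD x)) ` F)"
  have c0m: "m < c0" unfolding c0_def using F Fne CD by (subst Min_gr_iff) auto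
  have "\<forall>y\<in>K. c0 \<le> f y"
  proof
    fix y assume y: "y \<in> K"
    then obtain x where x: "x \<in> F" "y \<in> ball x (snd (CD x))" using F by blast
    then have "fst (CD x) < f y" using CD F by (auto simp: dist_commute)
    moreover have "c0 \<le> fst (CD x)" unfolding c0_def using F x by (intro Min_le) auto
    ultimately show "c0 \<le> f y" by simp
  qed
  then have "c0 \<le> m" unfolding m_def by (simp add: INF_greatest)
  then show False using c0m by simp
qed

lemma g_lower:
  fixes g :: "'a::euclidean_space \<Rightarrow> ereal"
  assumes pr: "proper_fun g" and ls: "lsc_fun g" and cv: "convex_fun g"
  shows "\<exists>a \<beta>. \<beta> \<ge> 0 \<and> (\<forall>y. ereal (a - \<beta> * norm y) \<le> g y)"
proof -
  obtain x0 where x0: "g x0 < \<infinity>" using pr unfolding proper_fun_def by blast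
  have ninf: "\<And>x. g x \<noteq> -\<infinity>" using pr unfolding proper_fun_def by blast
  obtain r0 where r0: "g x0 = ereal r0" using x0 ninf[of x0] by (cases "g x0") auto
  obtain x1 where x1: "x1 \<in> cball x0 1" "\<forall>y\<in>cball x0 1. g x1 \<le> g y"
    using compact_min[of g "cball x0 1"] lsc_delta[OF ls] by fastforce
  have "g x1 \<le> g x0" using x1 by simp
  then obtain m1 where m1: "g x1 = ereal m1" "m1 \<le> r0" using r0 ninf[of x1] by (cases "g x1") auto
  define \<beta> where "\<beta> = r0 - m1"
  have b0: "\<beta> \<ge> 0" using m1 \<beta>_def by simp
  have main: "ereal (m1 - \<beta> * norm (y - x0)) \<le> g y" for y
  proof (cases "norm (y - x0) \<le> 1")
    case True
    then have "g x1 \<le> g y" using x1 by (simp add: dist_norm norm_minus_commute)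
    moreover have "m1 - \<beta> * norm (y - x0) \<le> m1" using b0 by simp
    ultimately show ?thesis using m1 by (metis ereal_less_eq(3) order_trans)
  next
    case False
    define t where "t = norm (y - x0)"
    have t1: "t > 1" using False t_def by simp
    show ?thesis
    proof (cases "g y")
      case PInf then show ?thesis by simp
    next
      case MInf then show ?thesis using ninf by simp
    next
      case (real r)
      define s where "s = (1/t) *\<^sub>R y + (1 - 1/t) *\<^sub>R x0"
      have "s - x0 = (1/t) *\<^sub>R (y - x0)" unfolding s_def by (simp add: algebra_simps)
      then have "norm (s - x0) = 1" using t1 t_def by (auto simp: norm_minus_commute)
      then have sK: "s \<in> cball x0 1" by (simp add: dist_norm norm_minus_commute)
      have "g s \<le> ereal (1/t) * g y + ereal (1 - 1/t) * g x0"
        using cv t1 unfolding convex_fun_def s_def by auto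
      also have "\<dots> = ereal (r / t + (1 - 1/t) * r0)" using real r0 by simp
      finally have "ereal m1 \<le> ereal (r / t + (1 - 1/t) * r0)" using x1 sK m1 by (metis order_trans)
      then have "m1 \<le> r / t + (1 - 1/t) * r0" by simp
      then have "t * m1 \<le> t * (r / t + (1 - 1/t) * r0)" using t1 by simp
      also have "\<dots> = r + (t - 1) * r0" using t1 by (simp add: field_simps)
      finally have "t * m1 \<le> r + (t - 1) * r0" .
      then have "m1 - \<beta> * t \<le> r" unfolding \<beta>_def using m1 by (simp add: algebra_simps)
      then show ?thesis using real t_def by simp
    qed
  qed
  show ?thesis
  proof (rule exI[of _ "m1 - \<beta> * norm x0"], rule exI[of _ \<beta>], intro conjI b0 allI)
    fix y
    have "norm (y - x0) \<le> norm y + norm x0" by (rule norm_triangle_ineq4)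
    then have "\<beta> * norm (y - x0) \<le> \<beta> * (norm y + norm x0)" using b0 by (rule mult_left_mono)
    then have "m1 - \<beta> * norm x0 - \<beta> * norm y \<le> m1 - \<beta> * norm (y - x0)" by (simp add: algebra_simps)
    then show "ereal (m1 - \<beta> * norm x0 - \<beta> * norm y) \<le> g y" using main[of y] by (metis ereal_less_eq(3) order_trans)
  qed
qed

lemma h_lsc:
  fixes g :: "'a::euclidean_space \<Rightarrow> ereal"
  assumes ninf: "\<And>x. g x \<noteq> -\<infinity>" and ls: "lsc_fun g" and cq: "\<And>x. continuous (at x) q"
    and cx: "c < g x + ereal (q x)"
  shows "\<exists>d>0. \<forall>y. dist y x < d \<longrightarrow> c < g y + ereal (q y)"
proof (cases c)
  case MInf
  show ?thesis
  proof (intro exI[of _ 1] conjI allI impI)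
    fix y show "c < g y + ereal (q y)" using ninf[of y] MInf by (cases "g y") auto
  qed auto
next
  case PInf then show ?thesis using cx by simp
next
  case (real cr)
  have "ereal (cr - q x) < g x" using cx real by (cases "g x") auto
  then obtain c1 where c1: "ereal (cr - q x) < ereal c1" "ereal c1 < g x" using ereal_dense2 by blast
  define e where "e = c1 - (cr - q x)"
  have e: "e > 0" using c1 e_def by simp
  obtain d1 where d1: "d1 > 0" "\<forall>y. dist y x < d1 \<longrightarrow> ereal c1 < g y" using lsc_delta[OF ls c1(2)] by blast
  obtain d2 where d2: "d2 > 0" "\<forall>y. dist y x < d2 \<longrightarrow> dist (q y) (q x) < e"
    using cq[of x] e unfolding continuous_at_eps_delta by blast
  show ?thesis
  proof (intro exI[of _ "min d1 d2"] conjI allI impI)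
    show "min d1 d2 > 0" using d1 d2 by simp
    fix y assume y: "dist y x < min d1 d2"
    have g1: "ereal c1 < g y" using d1 y by simp
    have "dist (q y) (q x) < e" using d2 y by simp
    then have q1: "q x - e < q y" by (simp add: dist_real_def abs_less_iff)
    have "ereal cr = ereal c1 + ereal (q x - e)" unfolding e_def by simp
    also have "\<dots> < g y + ereal (q y)" using g1 q1 by (cases "g y") auto
    finally show "c < g y + ereal (q y)" using real by simp
  qed
qed

lemma q_cont: "continuous (at x) (\<lambda>y::'a::real_normed_vector. (1 / (2 * \<gamma>)) * (norm (y - u))\<^sup>2)"
  by (intro continuous_intros)

lemma coercive_real:
  fixes a \<beta> \<gamma> H0 nu t :: real
  assumes g: "\<gamma> > 0" and b: "\<beta> \<ge> 0" and nu: "nu \<ge> 0"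
    and t: "t > nu + max 1 (2 * \<gamma> * (\<bar>H0\<bar> + \<bar>a\<bar> + \<beta> * nu + \<beta> + 1))"
  shows "H0 < a - \<beta> * t + (1 / (2 * \<gamma>)) * (t - nu)\<^sup>2"
proof -
  define M where "M = \<bar>H0\<bar> + \<bar>a\<bar> + \<beta> * nu + \<beta> + 1"
  define s where "s = t - nu"
  have s1: "s > 1" and s2: "s > 2 * \<gamma> * M" using t unfolding s_def M_def by auto
  have "s * (2 * \<gamma> * M) \<le> s * s" using s1 s2 by (intro mult_left_mono) auto
  then have "s * M \<le> (1 / (2 * \<gamma>)) * s\<^sup>2" using g by (simp add: field_simps power2_eq_square)
  moreover have "M - \<beta> \<le> s * (M - \<beta>)"
  proof -
    have "M - \<beta> \<ge> 1" unfolding M_def using b nu by simp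
    then have "1 * (M - \<beta>) \<le> s * (M - \<beta>)" using s1 by (intro mult_right_mono) auto
    then show ?thesis by simp
  qed
  ultimately have "(M - \<beta>) + \<beta> * s \<le> (1 / (2 * \<gamma>)) * s\<^sup>2" by (simp add: algebra_simps)
  moreover have "H0 - a + \<beta> * nu < M - \<beta>" unfolding M_def by linarith
  ultimately have "H0 < a - \<beta> * (s + nu) + (1 / (2 * \<gamma>)) * s\<^sup>2" by (simp add: algebra_simps)
  then show ?thesis unfolding s_def by simp
qed

lemma prox_exists:
  fixes g :: "'a::euclidean_space \<Rightarrow> ereal"
  assumes pr: "proper_fun g" and ls: "lsc_fun g" and cv: "convex_fun g" and g0: "\<gamma> > 0"
  shows "\<exists>p. \<forall>y. g p + ereal ((1 / (2 * \<gamma>)) * (norm (p - u))\<^sup>2) \<le> g y + ereal ((1 / (2 * \<gamma>)) * (norm (y - u))\<^sup>2)"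
proof -
  define h where "h y = g y + ereal ((1 / (2 * \<gamma>)) * (norm (y - u))\<^sup>2)" for y
  have ninf: "\<And>x. g x \<noteq> -\<infinity>" using pr unfolding proper_fun_def by blast
  obtain x0 where x0: "g x0 < \<infinity>" using pr unfolding proper_fun_def by blast
  obtain r0 where r0: "g x0 = ereal r0" using x0 ninf[of x0] by (cases "g x0") auto
  define H0 where "H0 = r0 + (1 / (2 * \<gamma>)) * (norm (x0 - u))\<^sup>2"
  have hx0: "h x0 = ereal H0" unfolding h_def H0_def r0 by simp
  obtain a \<beta> where ab: "\<beta> \<ge> 0" "\<forall>y. ereal (a - \<beta> * norm y) \<le> g y" using g_lower[OF pr ls cv] by blast
  define R where "R = norm u + max 1 (2 * \<gamma> * (\<bar>H0\<bar> + \<bar>a\<bar> + \<beta> * norm u + \<beta> + 1)) + norm x0"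
  have far: "h x0 < h y" if y: "norm y > R" for y
  proof -
    have t: "norm y > norm u + max 1 (2 * \<gamma> * (\<bar>H0\<bar> + \<bar>a\<bar> + \<beta> * norm u + \<beta> + 1))"
      using y norm_ge_zero[of x0] unfolding R_def by linarith
    have H: "H0 < a - \<beta> * norm y + (1 / (2 * \<gamma>)) * (norm y - norm u)\<^sup>2"
      by (rule coercive_real[OF g0 ab(1) norm_ge_zero t])
    have "norm y - norm u \<le> norm (y - u)" by (rule norm_triangle_ineq2)
    moreover have "0 \<le> norm y - norm u" using t by simp
    ultimately have "(norm y - norm u)\<^sup>2 \<le> (norm (y - u))\<^sup>2" by (rule power_mono)
    then have "(1 / (2 * \<gamma>)) * (norm y - norm u)\<^sup>2 \<le> (1 / (2 * \<gamma>)) * (norm (y - u))\<^sup>2"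
      using g0 by (intro mult_left_mono) auto
    then have "ereal H0 < ereal (a - \<beta> * norm y) + ereal ((1 / (2 * \<gamma>)) * (norm (y - u))\<^sup>2)"
      using H by simp
    also have "\<dots> \<le> h y" unfolding h_def using ab(2) by (intro add_right_mono) auto
    finally show ?thesis using hx0 by simp
  qed
  have hl: "\<And>x c. c < h x \<Longrightarrow> \<exists>d>0. \<forall>y. dist y x < d \<longrightarrow> c < h y"
    unfolding h_def by (rule h_lsc[OF ninf ls q_cont])
  have R0: "R \<ge> 0" unfolding R_def by (simp add: add_nonneg_nonneg)
  have ne: "cball (0::'a) R \<noteq> {}" using R0 by simp
  obtain p where p: "p \<in> cball 0 R" "\<forall>y\<in>cball 0 R. h p \<le> h y"
    using compact_min[OF hl compact_cball ne] by blast
  have "x0 \<in> cball 0 R" unfolding R_def by simp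
  then have "h p \<le> h x0" using p by blast
  have "\<forall>y. h p \<le> h y"
  proof
    fix y show "h p \<le> h y"
    proof (cases "y \<in> cball 0 R")
      case True then show ?thesis using p by blast
    next
      case False then have "norm y > R" by simp
      then show ?thesis using far \<open>h p \<le> h x0\<close> by (meson order_trans less_imp_le)
    qed
  qed
  then show ?thesis unfolding h_def by blast
qed

lemma norm_add_sq: "(norm (a + b))\<^sup>2 = (norm a)\<^sup>2 + 2 * inner a b + (norm (b::'a::real_inner))\<^sup>2"
  by (simp add: power2_norm_eq_inner inner_add inner_commute algebra_simps)

lemma min_imp_subdiff:
  fixes g :: "'a::real_inner \<Rightarrow> ereal"
  assumes pr: "proper_fun g" and cv: "convex_fun g" and g0: "\<gamma> > 0"
    and mn: "\<forall>y. g p + ereal ((1 / (2 * \<gamma>)) * (norm (p - u))\<^sup>2) \<le> g y + ereal ((1 / (2 * \<gamma>)) * (norm (y - u))\<^sup>2)"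
  shows "(1/\<gamma>) *\<^sub>R (u - p) \<in> subdiff g p"
proof -
  define Q where "Q y = (1 / (2 * \<gamma>)) * (norm (y - u))\<^sup>2" for y
  have ninf: "\<And>x. g x \<noteq> -\<infinity>" using pr unfolding proper_fun_def by blast
  obtain x0 where x0: "g x0 < \<infinity>" using pr unfolding proper_fun_def by blast
  have "g x0 + ereal (Q x0) < \<infinity>" using x0 by (cases "g x0") auto
  then have "g p + ereal (Q p) < \<infinity>" using mn[rule_format, of x0] unfolding Q_def
    by (rule order_le_less_trans[rotated])
  then obtain gp where gp: "g p = ereal gp" using ninf[of p] by (cases "g p") auto
  have key: "g p + ereal (inner ((1/\<gamma>) *\<^sub>R (u - p)) (y - p)) \<le> g y" for y
  proof (cases "g y")
    case PInf then show ?thesis using gp by simp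
  next
    case MInf then show ?thesis using ninf by simp
  next
    case (real gy)
    define N where "N = (norm (y - p))\<^sup>2 / (2 * \<gamma>)"
    have N0: "N \<ge> 0" unfolding N_def using g0 by simp
    have bound: "gp - gy \<le> inner (p - u) (y - p) / \<gamma> + t * N" if t: "0 < t" "t < 1" for t
    proof -
      define yt where "yt = t *\<^sub>R y + (1 - t) *\<^sub>R p"
      have "g yt \<le> ereal t * g y + ereal (1 - t) * g p"
        using cv t unfolding convex_fun_def yt_def by auto
      also have "\<dots> = ereal (t * gy + (1 - t) * gp)" using real gp by simp
      finally have gyt: "g yt \<le> ereal (t * gy + (1 - t) * gp)" .
      have "ereal (gp + Q p) \<le> g yt + ereal (Q yt)" using mn[rule_format, of yt] gp unfolding Q_def by simp
      also have "\<dots> \<le> ereal (t * gy + (1 - t) * gp) + ereal (Q yt)" using gyt by (rule add_right_mono)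
      finally have A: "gp + Q p \<le> t * gy + (1 - t) * gp + Q yt" by simp
      have e1: "yt - u = (p - u) + t *\<^sub>R (y - p)" unfolding yt_def by (simp add: algebra_simps)
      have "(norm (yt - u))\<^sup>2 = (norm (p - u))\<^sup>2 + 2 * inner (p - u) (t *\<^sub>R (y - p)) + (norm (t *\<^sub>R (y - p)))\<^sup>2"
        unfolding e1 by (rule norm_add_sq)
      also have "\<dots> = (norm (p - u))\<^sup>2 + 2 * t * inner (p - u) (y - p) + t\<^sup>2 * (norm (y - p))\<^sup>2"
        by (simp add: power_mult_distrib)
      finally have "Q yt = Q p + t * (inner (p - u) (y - p) / \<gamma>) + t * (t * N)"
        unfolding Q_def N_def using g0 by (simp add: field_simps power2_eq_square)
      with A have "t * (gp - gy) \<le> t * (inner (p - u) (y - p) / \<gamma> + t * N)"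
        by (simp add: algebra_simps)
      then show ?thesis using t by simp
    qed
    have "gp - gy \<le> inner (p - u) (y - p) / \<gamma>"
    proof (rule ccontr)
      assume "\<not> ?thesis"
      then have D: "gp - gy - inner (p - u) (y - p) / \<gamma> > 0" by simp
      define D where "D = gp - gy - inner (p - u) (y - p) / \<gamma>"
      define t where "t = min (1/2) (D / (2 * (N + 1)))"
      have t0: "0 < t" "t < 1" unfolding t_def D_def using D N0 by auto
      have "t * N \<le> (D / (2 * (N + 1))) * N" unfolding t_def using N0 by (intro mult_right_mono) auto
      also have "\<dots> < D"
      proof -
        have "(D / (2 * (N + 1))) * N = D * (N / (2 * (N + 1)))" by simp
        also have "\<dots> < D * 1" using D N0 unfolding D_def[symmetric]
          by (intro mult_strict_left_mono) (auto simp: field_simps)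
        finally show ?thesis by simp
      qed
      finally show False using bound[OF t0] unfolding D_def by simp
    qed
    moreover have "inner ((1/\<gamma>) *\<^sub>R (u - p)) (y - p) = - inner (p - u) (y - p) / \<gamma>"
      by (simp add: inner_diff_left inner_diff_right inner_commute diff_divide_distrib)
    ultimately have "gp + inner ((1/\<gamma>) *\<^sub>R (u - p)) (y - p) \<le> gy" by linarith
    then show ?thesis using gp real by simp
  qed
  show ?thesis unfolding subdiff_def using gp key by auto
qed

lemma subdiff_imp_min:
  fixes g :: "'a::real_inner \<Rightarrow> ereal"
  assumes g0: "\<gamma> > 0" and sd: "(1/\<gamma>) *\<^sub>R (u - p) \<in> subdiff g p" and yp: "y \<noteq> p"
  shows "g p + ereal ((1 / (2 * \<gamma>)) * (norm (p - u))\<^sup>2) < g y + ereal ((1 / (2 * \<gamma>)) * (norm (y - u))\<^sup>2)"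
proof -
  define v where "v = (1/\<gamma>) *\<^sub>R (u - p)"
  obtain gp where gp: "g p = ereal gp" using sd unfolding subdiff_def by (cases "g p") auto
  have sub: "g p + ereal (inner v (y - p)) \<le> g y" using sd unfolding subdiff_def v_def by blast
  show ?thesis
  proof (cases "g y")
    case PInf then show ?thesis using gp by simp
  next
    case MInf then show ?thesis using sub gp by simp
  next
    case (real gy)
    have s: "gp + inner v (y - p) \<le> gy" using sub gp real by simp
    have "y - u = (p - u) + (y - p)" by simp
    then have e: "(norm (y - u))\<^sup>2 = (norm (p - u))\<^sup>2 + 2 * inner (p - u) (y - p) + (norm (y - p))\<^sup>2"
      by (metis norm_add_sq)
    have Qy: "(1 / (2 * \<gamma>)) * (norm (y - u))\<^sup>2 = (1 / (2 * \<gamma>)) * (norm (p - u))\<^sup>2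
       + inner (p - u) (y - p) / \<gamma> + (norm (y - p))\<^sup>2 / (2 * \<gamma>)"
      unfolding e using g0 by (simp add: field_simps)
    have vi: "inner v (y - p) = - inner (p - u) (y - p) / \<gamma>"
      unfolding v_def by (simp add: inner_diff_left inner_diff_right inner_commute diff_divide_distrib)
    have "(norm (y - p))\<^sup>2 / (2 * \<gamma>) > 0" using yp g0 by simp
    then have "gp + (1 / (2 * \<gamma>)) * (norm (p - u))\<^sup>2 < gy + (1 / (2 * \<gamma>)) * (norm (y - u))\<^sup>2"
      using s Qy vi by linarith
    then show ?thesis using gp real by simp
  qed
qed

lemma prox_unique:
  fixes g :: "'a::real_inner \<Rightarrow> ereal"
  assumes g0: "\<gamma> > 0" and sd: "(1/\<gamma>) *\<^sub>R (u - p) \<in> subdiff g p"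
  shows "prox \<gamma> g u = p"
  unfolding prox_def
proof (rule the_equality)
  show "\<forall>y. g p + ereal ((1 / (2 * \<gamma>)) * (norm (p - u))\<^sup>2) \<le> g y + ereal ((1 / (2 * \<gamma>)) * (norm (y - u))\<^sup>2)"
  proof
    fix y show "g p + ereal ((1 / (2 * \<gamma>)) * (norm (p - u))\<^sup>2) \<le> g y + ereal ((1 / (2 * \<gamma>)) * (norm (y - u))\<^sup>2)"
    proof (cases "y = p")
      case False show ?thesis using subdiff_imp_min[OF g0 sd False] by (rule less_imp_le)
    qed simp
  qed
  fix p' assume mn: "\<forall>y. g p' + ereal ((1 / (2 * \<gamma>)) * (norm (p' - u))\<^sup>2) \<le> g y + ereal ((1 / (2 * \<gamma>)) * (norm (y - u))\<^sup>2)"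
  show "p' = p"
  proof (rule ccontr)
    assume "p' \<noteq> p"
    then have "g p + ereal ((1 / (2 * \<gamma>)) * (norm (p - u))\<^sup>2) < g p' + ereal ((1 / (2 * \<gamma>)) * (norm (p' - u))\<^sup>2)"
      by (rule subdiff_imp_min[OF g0 sd])
    moreover have "g p' + ereal ((1 / (2 * \<gamma>)) * (norm (p' - u))\<^sup>2) \<le> g p + ereal ((1 / (2 * \<gamma>)) * (norm (p - u))\<^sup>2)"
      using mn by blast
    ultimately show False by simp
  qed
qed

lemma prox_subdiff:
  fixes g :: "'a::euclidean_space \<Rightarrow> ereal"
  assumes pr: "proper_fun g" and ls: "lsc_fun g" and cv: "convex_fun g" and g0: "\<gamma> > 0"
  shows "(1/\<gamma>) *\<^sub>R (u - prox \<gamma> g u) \<in> subdiff g (prox \<gamma> g u)"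
proof -
  obtain p where p: "\<forall>y. g p + ereal ((1 / (2 * \<gamma>)) * (norm (p - u))\<^sup>2) \<le> g y + ereal ((1 / (2 * \<gamma>)) * (norm (y - u))\<^sup>2)"
    using prox_exists[OF pr ls cv g0] by blast
  have sd: "(1/\<gamma>) *\<^sub>R (u - p) \<in> subdiff g p" by (rule min_imp_subdiff[OF pr cv g0 p])
  then have "prox \<gamma> g u = p" by (rule prox_unique[OF g0])
  then show ?thesis using sd by simp
qed

lemma subdiff_mono:
  assumes "v1 \<in> subdiff g p1" "v2 \<in> subdiff g p2"
  shows "inner (v1 - v2) (p1 - p2) \<ge> 0"
proof -
  obtain a1 where a1: "g p1 = ereal a1" using assms(1) unfolding subdiff_def by (cases "g p1") auto
  obtain a2 where a2: "g p2 = ereal a2" using assms(2) unfolding subdiff_def by (cases "g p2") auto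
  have "g p1 + ereal (inner v1 (p2 - p1)) \<le> g p2" using assms(1) unfolding subdiff_def by blast
  then have 1: "a1 + inner v1 (p2 - p1) \<le> a2" using a1 a2 by simp
  have "g p2 + ereal (inner v2 (p1 - p2)) \<le> g p1" using assms(2) unfolding subdiff_def by blast
  then have 2: "a2 + inner v2 (p1 - p2) \<le> a1" using a1 a2 by simp
  have "inner (v1 - v2) (p1 - p2) = - inner v1 (p2 - p1) - inner v2 (p1 - p2)"
    by (simp add: inner_simps)
  then show ?thesis using 1 2 by linarith
qed

lemma quad_deriv:
  fixes f :: "'a::real_inner \<Rightarrow> real"
  assumes b: "\<forall>d. \<bar>f (u + d) - f u - inner v d\<bar> \<le> C * (norm d)\<^sup>2" and C: "C \<ge> 0"
  shows "(f has_derivative (\<lambda>h. inner v h)) (at u)"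
  unfolding has_derivative_at
proof
  show "bounded_linear (inner v)" by (rule bounded_linear_inner_right)
  have ev: "eventually (\<lambda>h. norm (norm (f (u + h) - f u - inner v h) / norm h) \<le> C * norm h) (at 0)"
  proof (rule always_eventually, rule allI)
    fix h :: 'a
    show "norm (norm (f (u + h) - f u - inner v h) / norm h) \<le> C * norm h"
    proof (cases "h = 0")
      case True then show ?thesis by simp
    next
      case False
      then have np: "norm h > 0" by simp
      have "\<bar>f (u + h) - f u - inner v h\<bar> \<le> (C * norm h) * norm h"
        using b by (simp add: power2_eq_square mult.assoc)
      then show ?thesis using np by (simp add: divide_le_eq)
    qed
  qed
  have "((\<lambda>h. norm h) \<longlongrightarrow> 0) (at (0::'a))"
    using tendsto_norm_zero[OF tendsto_ident_at[of "0::'a" UNIV]] by simp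
  then have "((\<lambda>h. C * norm h) \<longlongrightarrow> C * 0) (at (0::'a))" by (rule tendsto_mult[OF tendsto_const])
  then have "((\<lambda>h. C * norm h) \<longlongrightarrow> 0) (at (0::'a))" by simp
  then show "((\<lambda>h. norm (f (u + h) - f u - inner v h) / norm h) \<longlongrightarrow> 0) (at 0)"
    by (rule Lim_null_comparison[OF ev])
qed

lemma env_val:
  fixes g :: "'a::euclidean_space \<Rightarrow> ereal"
  assumes pr: "proper_fun g" and ls: "lsc_fun g" and cv: "convex_fun g" and g0: "\<gamma> > 0"
  shows "moreau_env \<gamma> g u = g (prox \<gamma> g u) + ereal ((1 / (2 * \<gamma>)) * (norm (prox \<gamma> g u - u))\<^sup>2)"
    and "\<bar>g (prox \<gamma> g u)\<bar> \<noteq> \<infinity>"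
proof -
  let ?p = "prox \<gamma> g u"
  have sd: "(1/\<gamma>) *\<^sub>R (u - ?p) \<in> subdiff g ?p" by (rule prox_subdiff[OF pr ls cv g0])
  then show "\<bar>g ?p\<bar> \<noteq> \<infinity>" unfolding subdiff_def mem_Collect_eq by (rule conjunct1)
  have mn: "g ?p + ereal ((1 / (2 * \<gamma>)) * (norm (?p - u))\<^sup>2) \<le> g y + ereal ((1 / (2 * \<gamma>)) * (norm (y - u))\<^sup>2)" for y
  proof (cases "y = ?p")
    case False show ?thesis using subdiff_imp_min[OF g0 sd False] by (rule less_imp_le)
  qed simp
  show "moreau_env \<gamma> g u = g ?p + ereal ((1 / (2 * \<gamma>)) * (norm (?p - u))\<^sup>2)"
    unfolding moreau_env_def
  proof (rule antisym)
    show "(INF y. g y + ereal (1 / (2 * \<gamma>) * (norm (y - u))\<^sup>2)) \<le> g ?p + ereal (1 / (2 * \<gamma>) * (norm (?p - u))\<^sup>2)"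
      by (rule INF_lower) simp
    show "g ?p + ereal (1 / (2 * \<gamma>) * (norm (?p - u))\<^sup>2) \<le> (INF y. g y + ereal (1 / (2 * \<gamma>) * (norm (y - u))\<^sup>2))"
      by (rule INF_greatest) (rule mn)
  qed
qed

lemma env_bound:
  fixes g :: "'a::euclidean_space \<Rightarrow> ereal"
  assumes pr: "proper_fun g" and ls: "lsc_fun g" and cv: "convex_fun g" and g0: "\<gamma> > 0"
  shows "\<bar>real_of_ereal (moreau_env \<gamma> g (u + d)) - real_of_ereal (moreau_env \<gamma> g u)
          - inner ((1/\<gamma>) *\<^sub>R (u - prox \<gamma> g u)) d\<bar> \<le> (1 / (2 * \<gamma>)) * (norm d)\<^sup>2"
proof -
  define k where "k = 1 / (2 * \<gamma>)"
  have k0: "k > 0" unfolding k_def using g0 by simp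
  define p where "p = prox \<gamma> g u"
  define p' where "p' = prox \<gamma> g (u + d)"
  define e1 where "e1 = real_of_ereal (moreau_env \<gamma> g u)"
  define e2 where "e2 = real_of_ereal (moreau_env \<gamma> g (u + d))"
  obtain G where G: "g p = ereal G" using env_val(2)[OF pr ls cv g0, of u] unfolding p_def by (cases "g (prox \<gamma> g u)") auto
  obtain G' where G': "g p' = ereal G'" using env_val(2)[OF pr ls cv g0, of "u + d"] unfolding p'_def by (cases "g (prox \<gamma> g (u + d))") auto
  have E1: "moreau_env \<gamma> g u = ereal (G + k * (norm (p - u))\<^sup>2)"
    using env_val(1)[OF pr ls cv g0, of u] G unfolding p_def k_def by simp
  have E2: "moreau_env \<gamma> g (u + d) = ereal (G' + k * (norm (p' - (u + d)))\<^sup>2)"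
    using env_val(1)[OF pr ls cv g0, of "u + d"] G' unfolding p'_def k_def by simp
  have "moreau_env \<gamma> g (u + d) \<le> g p + ereal (k * (norm (p - (u + d)))\<^sup>2)"
    unfolding moreau_env_def k_def by (rule INF_lower2[of p]) auto
  then have U: "e2 \<le> G + k * (norm (p - (u + d)))\<^sup>2" unfolding e2_def using E2 G by simp
  have "moreau_env \<gamma> g u \<le> g p' + ereal (k * (norm (p' - u))\<^sup>2)"
    unfolding moreau_env_def k_def by (rule INF_lower2[of p']) auto
  then have L: "e1 \<le> G' + k * (norm (p' - u))\<^sup>2" unfolding e1_def using E1 G' by simp
  have e1v: "e1 = G + k * (norm (p - u))\<^sup>2" unfolding e1_def using E1 by simp
  have e2v: "e2 = G' + k * (norm (p' - (u + d)))\<^sup>2" unfolding e2_def using E2 by simp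
  have s1: "(1/\<gamma>) *\<^sub>R (u + d - p') \<in> subdiff g p'" unfolding p'_def by (rule prox_subdiff[OF pr ls cv g0])
  have s2: "(1/\<gamma>) *\<^sub>R (u - p) \<in> subdiff g p" unfolding p_def by (rule prox_subdiff[OF pr ls cv g0])
  have "inner ((1/\<gamma>) *\<^sub>R (u + d - p') - (1/\<gamma>) *\<^sub>R (u - p)) (p' - p) \<ge> 0"
    by (rule subdiff_mono[OF s1 s2])
  moreover have "(1/\<gamma>) *\<^sub>R (u + d - p') - (1/\<gamma>) *\<^sub>R (u - p) = (1/\<gamma>) *\<^sub>R ((u + d - p') - (u - p))"
    by (simp only: scaleR_diff_right)
  moreover have "(u + d - p') - (u - p) = d - (p' - p)" by (simp add: algebra_simps)
  ultimately have "(1/\<gamma>) * inner (d - (p' - p)) (p' - p) \<ge> 0" by simp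
  then have M: "inner (d - (p' - p)) (p' - p) \<ge> 0" using g0 by (simp add: zero_le_divide_iff)
  define w where "w = p' - p"
  define A1 where "A1 = inner (p - u) d"
  define A2 where "A2 = inner (p' - u - d) d"
  define B where "B = inner (d - w) d"
  define ND where "ND = (norm d)\<^sup>2"
  have B0: "B \<ge> 0"
  proof -
    have "B = inner (d - w) (d - w) + inner (d - w) w" unfolding B_def by (simp add: inner_simps)
    then show ?thesis using M unfolding w_def by simp
  qed
  have N1: "(norm (p - (u + d)))\<^sup>2 = (norm (p - u))\<^sup>2 - 2 * A1 + ND"
  proof -
    have "p - (u + d) = (p - u) + (- d)" by simp
    then have "(norm (p - (u + d)))\<^sup>2 = (norm (p - u))\<^sup>2 + 2 * inner (p - u) (- d) + (norm (- d))\<^sup>2"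
      by (metis norm_add_sq)
    then show ?thesis unfolding A1_def ND_def by simp
  qed
  have N2: "(norm (p' - u))\<^sup>2 = (norm (p' - (u + d)))\<^sup>2 + 2 * A2 + ND"
  proof -
    have "p' - u = (p' - u - d) + d" by simp
    then have "(norm (p' - u))\<^sup>2 = (norm (p' - u - d))\<^sup>2 + 2 * inner (p' - u - d) d + (norm d)\<^sup>2"
      by (metis norm_add_sq)
    then show ?thesis unfolding A2_def ND_def by (simp add: diff_diff_eq)
  qed
  have A21: "A2 = A1 - B" unfolding A1_def A2_def B_def w_def by (simp add: inner_simps)
  have ip: "inner ((1/\<gamma>) *\<^sub>R (u - p)) d = - 2 * k * A1"
    unfolding k_def A1_def using g0 by (simp add: inner_simps field_simps)
  have kB: "k * B \<ge> 0" using k0 B0 by simp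
  have kN1: "k * (norm (p - (u + d)))\<^sup>2 = k * (norm (p - u))\<^sup>2 - 2 * k * A1 + k * ND"
    unfolding N1 by (simp add: algebra_simps)
  have kN2: "k * (norm (p' - u))\<^sup>2 = k * (norm (p' - (u + d)))\<^sup>2 + 2 * k * A2 + k * ND"
    unfolding N2 by (simp add: algebra_simps)
  have kA: "k * A2 = k * A1 - k * B" unfolding A21 by (simp add: algebra_simps)
  have up: "e2 - e1 - (- 2 * k * A1) \<le> k * ND"
    using U e1v kN1 by linarith
  have lo: "e2 - e1 - (- 2 * k * A1) \<ge> - (k * ND)"
    using L e2v kN2 kA kB by linarith
  show ?thesis using up lo ip unfolding e1_def e2_def k_def[symmetric] ND_def p_def by (simp add: abs_le_iff)
qed

lemma transpose_diff': "transpose (X - Y) = transpose X - transpose (Y::real^'n^'m)"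
  by (simp add: transpose_def vec_eq_iff)

lemma sym_inner:
  fixes S :: "real^'n^'n"
  assumes "transpose S = S"
  shows "inner (S *v a) b = inner a (S *v b)"
proof -
  have "S *v a = a v* transpose S" by simp
  then have "S *v a = a v* S" using assms by simp
  then show ?thesis by (simp add: dot_lmul_matrix)
qed

lemma sym_inv:
  fixes M :: "real^'n^'n"
  assumes sym: "transpose M = M" and pd: "\<forall>x. x \<noteq> 0 \<longrightarrow> 0 < x \<bullet> (M *v x)"
  shows "M ** matrix_inv M = mat 1" "matrix_inv M ** M = mat 1" "transpose (matrix_inv M) = matrix_inv M"
proof -
  have "\<forall>x. M *v x = 0 \<longrightarrow> x = 0" using pd by (metis inner_zero_right less_irrefl)
  then have "\<exists>B. B ** M = mat 1" using matrix_left_invertible_ker by blast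
  then have "invertible M" using invertible_left_inverse by blast
  then have "\<exists>A'. M ** A' = mat 1 \<and> A' ** M = mat 1" unfolding invertible_def by blast
  then have QQ: "M ** matrix_inv M = mat 1 \<and> matrix_inv M ** M = mat 1"
    unfolding matrix_inv_def by (rule someI_ex)
  then show "M ** matrix_inv M = mat 1" "matrix_inv M ** M = mat 1" by auto
  let ?Q = "matrix_inv M"
  have "transpose ?Q ** M = transpose ?Q ** transpose M" using sym by simp
  also have "\<dots> = transpose (M ** ?Q)" by (simp add: matrix_transpose_mul)
  also have "\<dots> = mat 1" using QQ by simp
  finally have L: "transpose ?Q ** M = mat 1" .
  have "transpose ?Q = transpose ?Q ** (M ** ?Q)" using QQ by simp
  also have "\<dots> = (transpose ?Q ** M) ** ?Q" by (simp add: matrix_mul_assoc)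
  also have "\<dots> = ?Q" using L by simp
  finally show "transpose ?Q = ?Q" .
qed

lemma grad_unique:
  assumes "(f has_derivative (\<lambda>h. inner v h)) (at u)"
  shows "grad f u = v"
proof -
  have ex: "\<exists>v. (f has_derivative (\<lambda>h. inner v h)) (at u)" using assms by blast
  have d: "(f has_derivative (\<lambda>h. inner (grad f u) h)) (at u)"
    unfolding grad_def by (rule someI_ex[OF ex])
  have "(\<lambda>h. inner (grad f u) h) = (\<lambda>h. inner v h)" by (rule has_derivative_unique[OF d assms])
  then have "inner (grad f u) (grad f u - v) = inner v (grad f u - v)" by metis
  then have "inner (grad f u - v) (grad f u - v) = 0" by (simp add: inner_diff_left)
  then show ?thesis by simp
qed

lemma grad_psi:
  fixes g :: "real^'n \<Rightarrow> ereal" and P :: "real^'n^'n"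
  assumes pr: "proper_fun g" and ls: "lsc_fun g" and cv: "convex_fun g" and g0: "\<gamma> > 0"
    and Ps: "transpose P = P"
    and \<psi>_def: "\<psi> = (\<lambda>u. (1/2) * ((P *v u) \<bullet> u) + c \<bullet> u + \<gamma> * real_of_ereal (moreau_env \<gamma> g u))"
  shows "grad \<psi> u = P *v u + c + (u - prox \<gamma> g u)"
proof (rule grad_unique)
  let ?e = "\<lambda>u. real_of_ereal (moreau_env \<gamma> g u)"
  let ?p = "prox \<gamma> g u"
  have bl: "bounded_linear (\<lambda>x. P *v x)" using linear_conv_bounded_linear matrix_vector_mul_linear by blast
  obtain K where K: "K > 0" "\<forall>x. norm (P *v x) \<le> norm x * K"
    using bounded_linear.pos_bounded[OF bl] by blast
  show "(\<psi> has_derivative (\<lambda>h. inner (P *v u + c + (u - ?p)) h)) (at u)"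
  proof (rule quad_deriv)
    show "K / 2 + 1 / 2 \<ge> 0" using K by simp
    show "\<forall>d. \<bar>\<psi> (u + d) - \<psi> u - inner (P *v u + c + (u - ?p)) d\<bar> \<le> (K / 2 + 1 / 2) * (norm d)\<^sup>2"
    proof
      fix d
      define err where "err = ?e (u + d) - ?e u - inner ((1/\<gamma>) *\<^sub>R (u - ?p)) d"
      have err: "\<bar>err\<bar> \<le> (1 / (2 * \<gamma>)) * (norm d)\<^sup>2" unfolding err_def by (rule env_bound[OF pr ls cv g0])
      have sy: "inner (P *v d) u = inner (P *v u) d" using sym_inner[OF Ps, of d u] by (simp add: inner_commute)
      have q: "(P *v (u + d)) \<bullet> (u + d) - (P *v u) \<bullet> u = 2 * inner (P *v u) d + inner (P *v d) d"
        using sy by (simp add: matrix_vector_right_distrib inner_simps inner_commute)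
      have ge: "\<gamma> * inner ((1/\<gamma>) *\<^sub>R (u - ?p)) d = inner (u - ?p) d" using g0 by simp
      have eq: "\<psi> (u + d) - \<psi> u - inner (P *v u + c + (u - ?p)) d = (1/2) * inner (P *v d) d + \<gamma> * err"
        unfolding \<psi>_def err_def using q ge by (simp add: inner_simps algebra_simps)
      have "\<bar>inner (P *v d) d\<bar> \<le> norm (P *v d) * norm d" by (rule Cauchy_Schwarz_ineq2)
      also have "\<dots> \<le> (norm d * K) * norm d" using K by (intro mult_right_mono) auto
      finally have pd: "\<bar>inner (P *v d) d\<bar> \<le> K * (norm d)\<^sup>2" by (simp add: power2_eq_square algebra_simps)
      have ge2: "\<bar>\<gamma> * err\<bar> \<le> (1/2) * (norm d)\<^sup>2"
      proof -
        have "\<bar>\<gamma> * err\<bar> = \<gamma> * \<bar>err\<bar>" using g0 by (simp add: abs_mult)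
        also have "\<dots> \<le> \<gamma> * ((1 / (2 * \<gamma>)) * (norm d)\<^sup>2)" using err g0 by (intro mult_left_mono) auto
        also have "\<dots> = (1/2) * (norm d)\<^sup>2" using g0 by simp
        finally show ?thesis .
      qed
      have "\<bar>(1/2) * inner (P *v d) d + \<gamma> * err\<bar> \<le> (1/2) * \<bar>inner (P *v d) d\<bar> + \<bar>\<gamma> * err\<bar>"
        by (simp add: abs_triangle_ineq[THEN order_trans] abs_mult)
      also have "\<dots> \<le> (1/2) * (K * (norm d)\<^sup>2) + (1/2) * (norm d)\<^sup>2" using pd ge2 by linarith
      also have "\<dots> = (K / 2 + 1 / 2) * (norm d)\<^sup>2" by (simp add: algebra_simps)
      finally show "\<bar>\<psi> (u + d) - \<psi> u - inner (P *v u + c + (u - ?p)) d\<bar> \<le> (K / 2 + 1 / 2) * (norm d)\<^sup>2"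
        using eq by simp
    qed
  qed
qed

theorem lemma5p9:
  fixes A :: "real^'n^'n" and b :: "real^'n" and g :: "real^'n \<Rightarrow> ereal" and \<gamma> :: real
    and Q P :: "real^'n^'n" and c :: "real^'n" and \<psi> :: "real^'n \<Rightarrow> real"
  assumes A_sym: "transpose A = A"
    and A_psd: "\<forall>x. 0 \<le> x \<bullet> (A *v x)"
    and g_proper: "proper_fun g" and g_lsc: "lsc_fun g" and g_convex: "convex_fun g"
    and \<gamma>_pos: "\<gamma> > 0"
    and pd: "\<forall>x. x \<noteq> 0 \<longrightarrow> 0 < x \<bullet> ((mat 1 - \<gamma> *\<^sub>R A) *v x)"
    and Q_def: "Q = matrix_inv (mat 1 - \<gamma> *\<^sub>R A)"
    and c_def: "c = \<gamma> *\<^sub>R (Q *v b)"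
    and P_def: "P = Q - mat 1"
    and \<psi>_def: "\<psi> = (\<lambda>u. (1/2) * ((P *v u) \<bullet> u) + c \<bullet> u + \<gamma> * real_of_ereal (moreau_env \<gamma> g u))"
  shows "\<forall>u w z. z \<in> subdiff2_C1 \<psi> u w \<longleftrightarrow>
    (1 / \<gamma>) *\<^sub>R (z - P *v w) \<in>
      subdiff2 g (prox \<gamma> g u) ((1 / \<gamma>) *\<^sub>R (u - prox \<gamma> g u)) (Q *v w - z)"
proof -
  define M where "M = mat 1 - \<gamma> *\<^sub>R A"
  have Ms: "transpose M = M" unfolding M_def using A_sym by (simp add: transpose_diff' transpose_scalar)
  have pdM: "\<forall>x. x \<noteq> 0 \<longrightarrow> 0 < x \<bullet> (M *v x)" using pd unfolding M_def .
  have Qs: "transpose Q = Q" using sym_inv(3)[OF Ms pdM] Q_def M_def by simp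
  have Ps: "transpose P = P" unfolding P_def using Qs by (simp add: transpose_diff')
  have Pv: "\<And>x. P *v x = Q *v x - x" unfolding P_def by (simp add: matrix_vector_mult_diff_rdistrib)
  have ipP: "\<And>a b. inner a (P *v b) = inner (P *v a) b" using sym_inner[OF Ps] by simp
  have ipQ: "\<And>a b. inner a (Q *v b) = inner (Q *v a) b" using sym_inner[OF Qs] by simp
  have mneg: "\<And>(X::real^'n^'n) x. X *v (- x) = - (X *v x)"
    by (metis diff_0 matrix_vector_mult_0_right matrix_vector_mult_diff_distrib)
  have g0: "\<gamma> \<noteq> 0" using \<gamma>_pos by simp
  have gr: "\<And>u. grad \<psi> u = Q *v u + c - prox \<gamma> g u"
    using grad_psi[OF g_proper g_lsc g_convex \<gamma>_pos Ps \<psi>_def] Pv by (simp add: algebra_simps)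
  define G where "G = gph (subdiff g)"
  define G' where "G' = gph (\<lambda>x. {grad \<psi> x})"
  define \<Phi> where "\<Phi> = (\<lambda>z::((real^'n) \<times> (real^'n)). (fst z + \<gamma> *\<^sub>R snd z, P *v fst z + \<gamma> *\<^sub>R (Q *v snd z) + c))"
  define \<Psi> where "\<Psi> = (\<lambda>z::((real^'n) \<times> (real^'n)). (Q *v fst z + c - snd z, (1/\<gamma>) *\<^sub>R (snd z - c - P *v fst z)))"
  define L\<Phi> where "L\<Phi> = (\<lambda>z::((real^'n) \<times> (real^'n)). (fst z + \<gamma> *\<^sub>R snd z, P *v fst z + \<gamma> *\<^sub>R (Q *v snd z)))"
  define L\<Psi> where "L\<Psi> = (\<lambda>z::((real^'n) \<times> (real^'n)). (Q *v fst z - snd z, (1/\<gamma>) *\<^sub>R (snd z - P *v fst z)))"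
  have linL\<Phi>: "linear L\<Phi>" unfolding L\<Phi>_def
    by (intro linearI) (auto simp: prod_eq_iff algebra_simps)
  have linL\<Psi>: "linear L\<Psi>" unfolding L\<Psi>_def
    by (intro linearI) (auto simp: prod_eq_iff algebra_simps)
  have blL\<Phi>: "bounded_linear L\<Phi>" using linL\<Phi> linear_conv_bounded_linear by blast
  have blL\<Psi>: "bounded_linear L\<Psi>" using linL\<Psi> linear_conv_bounded_linear by blast
  have \<Phi>L: "\<Phi> = (\<lambda>z. L\<Phi> z + (0, c))" unfolding \<Phi>_def L\<Phi>_def by (auto simp: fun_eq_iff)
  have \<Psi>L: "\<Psi> = (\<lambda>z. L\<Psi> z + (c, - (1/\<gamma>) *\<^sub>R c))" unfolding \<Psi>_def L\<Psi>_def
    by (auto simp: fun_eq_iff algebra_simps)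
  have \<Phi>d: "\<And>a b. \<Phi> a - \<Phi> b = L\<Phi> (a - b)" unfolding \<Phi>L using linear_diff[OF linL\<Phi>] by simp
  have \<Psi>d: "\<And>a b. \<Psi> a - \<Psi> b = L\<Psi> (a - b)" unfolding \<Psi>L using linear_diff[OF linL\<Psi>] by simp
  obtain K1 where K1: "K1 > 0" "\<forall>x. norm (L\<Phi> x) \<le> norm x * K1" using bounded_linear.pos_bounded[OF blL\<Phi>] by blast
  obtain K2 where K2: "K2 > 0" "\<forall>x. norm (L\<Psi> x) \<le> norm x * K2" using bounded_linear.pos_bounded[OF blL\<Psi>] by blast
  have lip\<Phi>: "\<forall>a b. norm (\<Phi> a - \<Phi> b) \<le> K1 * norm (a - b)" using K1 \<Phi>d by (simp add: mult.commute)
  have lip\<Psi>: "\<forall>a b. norm (\<Psi> a - \<Psi> b) \<le> K2 * norm (a - b)" using K2 \<Psi>d by (simp add: mult.commute)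
  have cont\<Phi>: "\<forall>x. isCont \<Phi> x" unfolding \<Phi>L
    by (intro allI continuous_add linear_continuous_at[OF blL\<Phi>] continuous_const)
  have cont\<Psi>: "\<forall>x. isCont \<Psi> x" unfolding \<Psi>L
    by (intro allI continuous_add linear_continuous_at[OF blL\<Psi>] continuous_const)
  have inv1: "\<forall>x. \<Phi> (\<Psi> x) = x"
    unfolding \<Phi>_def \<Psi>_def using g0
    by (auto simp: prod_eq_iff Pv algebra_simps matrix_vector_mult_diff_distrib matrix_vector_right_distrib)
  have inv2: "\<forall>x. \<Psi> (\<Phi> x) = x"
    unfolding \<Phi>_def \<Psi>_def using g0
    by (auto simp: prod_eq_iff Pv algebra_simps matrix_vector_mult_diff_distrib matrix_vector_right_distrib)
  have mapG: "\<Phi> ` G \<subseteq> G'"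
  proof
    fix y assume "y \<in> \<Phi> ` G"
    then obtain p v where pv: "v \<in> subdiff g p" and y: "y = \<Phi> (p, v)" unfolding G_def gph_def by auto
    define x where "x = p + \<gamma> *\<^sub>R v"
    have "(1/\<gamma>) *\<^sub>R (x - p) = v" unfolding x_def using g0 by simp
    then have "prox \<gamma> g x = p" using prox_unique[OF \<gamma>_pos] pv by metis
    then have "grad \<psi> x = P *v p + \<gamma> *\<^sub>R (Q *v v) + c" unfolding gr x_def
      by (simp add: Pv algebra_simps matrix_vector_right_distrib)
    then show "y \<in> G'" unfolding G'_def gph_def y \<Phi>_def x_def by simp
  qed
  have mapG': "\<Psi> ` G' \<subseteq> G"
  proof
    fix y assume "y \<in> \<Psi> ` G'"
    then obtain x where y: "y = \<Psi> (x, grad \<psi> x)" unfolding G'_def gph_def by auto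
    have "y = (prox \<gamma> g x, (1/\<gamma>) *\<^sub>R (x - prox \<gamma> g x))" unfolding y \<Psi>_def gr
      by (simp add: Pv algebra_simps)
    then show "y \<in> G" unfolding G_def gph_def using prox_subdiff[OF g_proper g_lsc g_convex \<gamma>_pos] by simp
  qed
  define T\<Phi> where "T\<Phi> = (\<lambda>y::((real^'n) \<times> (real^'n)). ((1/\<gamma>) *\<^sub>R (fst y + P *v snd y), fst y + Q *v snd y))"
  define T\<Psi> where "T\<Psi> = (\<lambda>y::((real^'n) \<times> (real^'n)). (\<gamma> *\<^sub>R (Q *v fst y) - P *v snd y, snd y - \<gamma> *\<^sub>R fst y))"
  have blT\<Phi>: "bounded_linear T\<Phi>" unfolding linear_conv_bounded_linear[symmetric] T\<Phi>_def
    by (intro linearI) (auto simp: prod_eq_iff algebra_simps)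
  have blT\<Psi>: "bounded_linear T\<Psi>" unfolding linear_conv_bounded_linear[symmetric] T\<Psi>_def
    by (intro linearI) (auto simp: prod_eq_iff algebra_simps)
  have adj\<Phi>: "\<forall>y a b. inner (T\<Phi> y) (a - b) = (1/\<gamma>) * inner y (\<Phi> a - \<Phi> b)"
  proof (intro allI)
    fix y a b :: "(real^'n) \<times> (real^'n)"
    obtain y1 y2 where y: "y = (y1, y2)" by (cases y)
    obtain d1 d2 where d: "a - b = (d1, d2)" by (cases "a - b")
    show "inner (T\<Phi> y) (a - b) = (1/\<gamma>) * inner y (\<Phi> a - \<Phi> b)"
      unfolding \<Phi>d d y T\<Phi>_def L\<Phi>_def using g0
      by (simp add: ipP ipQ inner_simps field_simps)
  qed
  have adj\<Psi>: "\<forall>y a b. inner (T\<Psi> y) (a - b) = \<gamma> * inner y (\<Psi> a - \<Psi> b)"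
  proof (intro allI)
    fix y a b :: "(real^'n) \<times> (real^'n)"
    obtain y1 y2 where y: "y = (y1, y2)" by (cases y)
    obtain d1 d2 where d: "a - b = (d1, d2)" by (cases "a - b")
    show "inner (T\<Psi> y) (a - b) = \<gamma> * inner y (\<Psi> a - \<Psi> b)"
      unfolding \<Psi>d d y T\<Psi>_def L\<Psi>_def using g0
      by (simp add: ipP ipQ inner_simps field_simps)
  qed
  show ?thesis
  proof (intro allI)
    fix u w z
    define p where "p = prox \<gamma> g u"
    define zb where "zb = (p, (1/\<gamma>) *\<^sub>R (u - p))"
    have \<Phi>zb: "\<Phi> zb = (u, grad \<psi> u)" unfolding zb_def \<Phi>_def gr p_def using g0
      by (simp add: Pv algebra_simps matrix_vector_mult_diff_distrib)
    have \<Psi>zb: "\<Psi> (u, grad \<psi> u) = zb" using inv2 \<Phi>zb by metis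
    have e1: "T\<Phi> (z, - w) = ((1 / \<gamma>) *\<^sub>R (z - P *v w), - (Q *v w - z))"
      unfolding T\<Phi>_def by (simp add: algebra_simps mneg)
    have e2: "T\<Psi> ((1 / \<gamma>) *\<^sub>R (z - P *v w), - (Q *v w - z)) = (z, - w)"
      unfolding T\<Psi>_def using g0 by (simp add: Pv algebra_simps matrix_vector_mult_diff_distrib)
    have L: "z \<in> subdiff2_C1 \<psi> u w \<longleftrightarrow> (z, - w) \<in> lim_normal_cone G' (u, grad \<psi> u)"
      unfolding subdiff2_C1_def coderiv_def G'_def by simp
    have R: "(1 / \<gamma>) *\<^sub>R (z - P *v w) \<in> subdiff2 g p ((1 / \<gamma>) *\<^sub>R (u - p)) (Q *v w - z)
       \<longleftrightarrow> ((1 / \<gamma>) *\<^sub>R (z - P *v w), - (Q *v w - z)) \<in> lim_normal_cone G zb"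
      unfolding subdiff2_def coderiv_def G_def zb_def by simp
    show "z \<in> subdiff2_C1 \<psi> u w \<longleftrightarrow>
      (1 / \<gamma>) *\<^sub>R (z - P *v w) \<in> subdiff2 g (prox \<gamma> g u) ((1 / \<gamma>) *\<^sub>R (u - prox \<gamma> g u)) (Q *v w - z)"
      unfolding p_def[symmetric] L R
    proof
      assume H: "(z, - w) \<in> lim_normal_cone G' (u, grad \<psi> u)"
      have "T\<Phi> (z, - w) \<in> lim_normal_cone G zb"
        by (rule lim_transfer[OF mapG mapG' inv1 inv2 cont\<Psi> K1(1) lip\<Phi> blT\<Phi> _ adj\<Phi>])
           (use H \<Phi>zb \<gamma>_pos in auto)
      then show "((1 / \<gamma>) *\<^sub>R (z - P *v w), - (Q *v w - z)) \<in> lim_normal_cone G zb" using e1 by simp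
    next
      assume H: "((1 / \<gamma>) *\<^sub>R (z - P *v w), - (Q *v w - z)) \<in> lim_normal_cone G zb"
      have "T\<Psi> ((1 / \<gamma>) *\<^sub>R (z - P *v w), - (Q *v w - z)) \<in> lim_normal_cone G' (u, grad \<psi> u)"
        by (rule lim_transfer[OF mapG' mapG inv2 inv1 cont\<Phi> K2(1) lip\<Psi> blT\<Psi> \<gamma>_pos adj\<Psi>])
           (use H \<Psi>zb in auto)
      then show "(z, - w) \<in> lim_normal_cone G' (u, grad \<psi> u)" using e2 by simp
    qed
  qed
qed

end
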